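(* Let $M$ be a nontrivial monoid in $\mathcal{C}$ and let $V=\mathbb{R}\otimes_\mathbb{Z}\mathrm{gp}(M)$. The following are equivalent: (a) $M$ is primary; (b) the only face submonoids of $M$ are $\{0\}$ and $M$; (c) $\mathsf{cone}_V(M)\setminus\{0\}$ is an open subset of $V$.
   Context: Convention: all monoids are commutative, cancellative, and reduced, written additively; $M^\bullet=M\setminus\{0\}$. $\mathcal{C}$ is the class of monoids isomorphic to a submonoid of a free commutative monoid of finite rank (equivalently, of $(\mathbb{N}^d,+)$). $M$ is regarded as a submonoid of $V$ via $M\hookrightarrow\mathrm{gp}(M)\hookrightarrow V$, and $V$ carries its Euclidean topology; $\mathsf{cone}_V(M)$ is the set of finite nonnegative linear combinations of elements of $M$. A face of a cone $C$ is a cone $F\subseteq C$ such that whenever $x,y\in C$ and $F$ meets the open segment between $x$ and $y$, then $x,y\in F$; a face submonoid is $M\cap F$ for a face $F$ of $\mathsf{cone}_V(M)$. $M$ is primary if $M$ is nontrivial and for all $x,y\in M^\bullet$ there is $n\in\mathbb{N}$ with $ny\in x+M$. *)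

theory Defs
  imports "HOL-Analysis.Analysis"
begin

text \<open>A monoid in the class C, realised concretely as a submonoid of (N^d,+),
  embedded into R^d.  Here d = CARD('n).\<close>
definition submonoid_Nd :: "(real ^ 'n) set \<Rightarrow> bool" where
  "submonoid_Nd M \<longleftrightarrow> 0 \<in> M \<and> (\<forall>x\<in>M. \<forall>y\<in>M. x + y \<in> M)
     \<and> (\<forall>x\<in>M. \<forall>i. x $ i \<in> \<nat>)"

definition primary :: "(real ^ 'n) set \<Rightarrow> bool" where
  "primary M \<longleftrightarrow> M \<noteq> {0} \<and>
     (\<forall>x\<in>M - {0}. \<forall>y\<in>M - {0}. \<exists>n::nat. \<exists>m\<in>M. of_nat n *\<^sub>R y = x + m)"

definition mcone :: "(real ^ 'n) set \<Rightarrow> (real ^ 'n) set" where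
  "mcone M = {\<Sum>x\<in>S. c x *\<^sub>R x | S c. finite S \<and> S \<subseteq> M \<and> (\<forall>x\<in>S. c x \<ge> 0)}"

definition face_of_cone :: "(real ^ 'n) set \<Rightarrow> (real ^ 'n) set \<Rightarrow> bool" where
  "face_of_cone F C \<longleftrightarrow> convex_cone F \<and> F \<subseteq> C \<and>
     (\<forall>x\<in>C. \<forall>y\<in>C. F \<inter> open_segment x y \<noteq> {} \<longrightarrow> x \<in> F \<and> y \<in> F)"

definition face_submonoid :: "(real ^ 'n) set \<Rightarrow> (real ^ 'n) set \<Rightarrow> bool" where
  "face_submonoid N M \<longleftrightarrow> (\<exists>F. face_of_cone F (mcone M) \<and> N = M \<inter> F)"

end

theory Submission
  imports Defs
begin


lemma mcone_iff: "v \<in> mcone M \<longleftrightarrow> (\<exists>S c. finite S \<and> S \<subseteq> M \<and> (\<forall>x\<in>S. c x \<ge> 0) \<and> v = (\<Sum>x\<in>S. c x *\<^sub>R x))"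
  unfolding mcone_def by blast

lemma mcone_0: "0 \<in> mcone M"
  unfolding mcone_iff by (rule exI[of _ "{}"]) auto

lemma mcone_base: "x \<in> M \<Longrightarrow> x \<in> mcone M"
  unfolding mcone_iff by (rule exI[of _ "{x}"], rule exI[of _ "\<lambda>_. 1"]) auto

lemma mcone_scale: assumes "v \<in> mcone M" "t \<ge> 0" shows "t *\<^sub>R v \<in> mcone M"
proof -
  obtain S c where S: "finite S" "S \<subseteq> M" "\<forall>x\<in>S. c x \<ge> 0" "v = (\<Sum>x\<in>S. c x *\<^sub>R x)"
    using assms(1) unfolding mcone_iff by blast
  show ?thesis unfolding mcone_iff
    by (rule exI[of _ S], rule exI[of _ "\<lambda>x. t * c x"])
       (use S assms(2) in \<open>auto simp: scaleR_sum_right\<close>)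
qed

lemma mcone_add: assumes "v \<in> mcone M" "w \<in> mcone M" shows "v + w \<in> mcone M"
proof -
  obtain S c where S: "finite S" "S \<subseteq> M" "\<forall>x\<in>S. c x \<ge> 0" "v = (\<Sum>x\<in>S. c x *\<^sub>R x)"
    using assms(1) unfolding mcone_iff by blast
  obtain T d where T: "finite T" "T \<subseteq> M" "\<forall>x\<in>T. d x \<ge> 0" "w = (\<Sum>x\<in>T. d x *\<^sub>R x)"
    using assms(2) unfolding mcone_iff by blast
  define c' where "c' x = (if x \<in> S then c x else 0)" for x
  define d' where "d' x = (if x \<in> T then d x else 0)" for x
  have 1: "(\<Sum>x\<in>S \<union> T. c' x *\<^sub>R x) = v"
  proof -
    have "(\<Sum>x\<in>S \<union> T. c' x *\<^sub>R x) = (\<Sum>x\<in>S. c' x *\<^sub>R x)"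
      by (rule sum.mono_neutral_right) (use S T in \<open>auto simp: c'_def\<close>)
    also have "\<dots> = v" using S by (simp add: c'_def)
    finally show ?thesis .
  qed
  have 2: "(\<Sum>x\<in>S \<union> T. d' x *\<^sub>R x) = w"
  proof -
    have "(\<Sum>x\<in>S \<union> T. d' x *\<^sub>R x) = (\<Sum>x\<in>T. d' x *\<^sub>R x)"
      by (rule sum.mono_neutral_right) (use S T in \<open>auto simp: d'_def\<close>)
    also have "\<dots> = w" using T by (simp add: d'_def)
    finally show ?thesis .
  qed
  show ?thesis unfolding mcone_iff
    apply (rule exI[of _ "S \<union> T"], rule exI[of _ "\<lambda>x. c' x + d' x"])
    using S T 1 2 by (auto simp: c'_def d'_def scaleR_add_left sum.distrib)
qed

lemma convex_mcone: "convex (mcone M)"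
  unfolding convex_def by (blast intro: mcone_add mcone_scale)

lemma cone_mcone: "conic (mcone M)"
  unfolding conic_def using mcone_scale by auto

lemma convex_cone_mcone: "convex_cone (mcone M)"
  unfolding convex_cone_def using convex_mcone cone_mcone mcone_0 by blast

lemma mcone_span: "mcone M \<subseteq> span M"
proof
  fix v assume "v \<in> mcone M"
  then obtain S c where S: "finite S" "S \<subseteq> M" "v = (\<Sum>x\<in>S. c x *\<^sub>R x)"
    unfolding mcone_iff by blast
  show "v \<in> span M" unfolding S(3)
    by (rule span_sum) (use S in \<open>auto intro: span_scale span_base\<close>)
qed

lemma affine_hull_mcone: "affine hull (mcone M) = span M"
proof -
  have "affine hull (mcone M) = span (mcone M)"
    by (rule affine_hull_span_0) (simp add: mcone_0 hull_inc)
  also have "\<dots> = span M"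
    by (metis mcone_base mcone_span span_mono span_span subsetI subset_antisym)
  finally show ?thesis .
qed

lemma open_from_relint:
  assumes "mcone M - {0} \<subseteq> rel_interior (mcone M)"
  shows "openin (top_of_set (span M)) (mcone M - {0})"
proof -
  have "mcone M - {0} = rel_interior (mcone M) \<inter> (- {0})"
    using assms rel_interior_subset by auto
  moreover have "openin (top_of_set (span M)) (rel_interior (mcone M) \<inter> (- {0}))"
    using openin_rel_interior[of "mcone M"] affine_hull_mcone
    by (metis open_Compl closed_singleton openin_Int_open)
  ultimately show ?thesis by simp
qed

lemma sub_nat_scale: assumes "submonoid_Nd M" "x \<in> M" shows "of_nat n *\<^sub>R x \<in> M"
  using assms unfolding submonoid_Nd_def
  by (induction n) (auto simp: scaleR_add_left)

lemma sub_sum: assumes "submonoid_Nd M" "finite S" "\<And>x. x \<in> S \<Longrightarrow> f x \<in> M" shows "sum f S \<in> M"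
  using assms(2,3) assms(1) unfolding submonoid_Nd_def
  by (induction S rule: finite_induct) auto



lemma mcone_decomp:
  assumes "v \<in> mcone M" "v \<noteq> 0"
  shows "\<exists>m\<in>M. m \<noteq> 0 \<and> (\<exists>c>0. \<exists>w\<in>mcone M. v = c *\<^sub>R m + w)"
proof -
  obtain S c where S: "finite S" "S \<subseteq> M" "\<forall>x\<in>S. c x \<ge> 0" "v = (\<Sum>x\<in>S. c x *\<^sub>R x)"
    using assms(1) unfolding mcone_iff by blast
  have "\<exists>x\<in>S. c x *\<^sub>R x \<noteq> 0"
  proof (rule ccontr)
    assume "\<not> ?thesis" then have "v = 0" using S(4) by (simp add: sum.neutral)
    with assms(2) show False by simp
  qed
  then obtain x0 where x0: "x0 \<in> S" "c x0 *\<^sub>R x0 \<noteq> 0" by blast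
  have "v = c x0 *\<^sub>R x0 + (\<Sum>x\<in>S - {x0}. c x *\<^sub>R x)"
    using S(1,4) x0(1) by (simp add: sum.remove)
  moreover have "(\<Sum>x\<in>S - {x0}. c x *\<^sub>R x) \<in> mcone M"
    unfolding mcone_iff using S by (intro exI[of _ "S - {x0}"] exI[of _ c]) auto
  moreover have "c x0 > 0" using x0 S(3) by (metis less_eq_real_def scale_zero_left)
  moreover have "x0 \<noteq> 0" using x0 by auto
  ultimately show ?thesis using x0 S(2) by blast
qed

lemma mcone_inner_nonneg:
  assumes "v \<in> mcone M" "\<forall>m\<in>M. a \<bullet> m \<ge> 0" shows "a \<bullet> v \<ge> 0"
proof -
  obtain S c where S: "finite S" "S \<subseteq> M" "\<forall>x\<in>S. c x \<ge> 0" "v = (\<Sum>x\<in>S. c x *\<^sub>R x)"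
    using assms(1) unfolding mcone_iff by blast
  show ?thesis unfolding S(4) inner_sum_right
    using S assms(2) by (auto intro!: sum_nonneg)
qed

lemma mcone_inner_zero:
  assumes "v \<in> mcone M" "\<forall>m\<in>M. a \<bullet> m = 0" shows "a \<bullet> v = 0"
proof -
  obtain S c where S: "finite S" "S \<subseteq> M" "\<forall>x\<in>S. c x \<ge> 0" "v = (\<Sum>x\<in>S. c x *\<^sub>R x)"
    using assms(1) unfolding mcone_iff by blast
  show ?thesis unfolding S(4) inner_sum_right
    using S assms(2) by (auto intro!: sum.neutral)
qed

lemma b_to_relint:
  assumes B: "\<forall>N. face_submonoid N M \<longrightarrow> N = {0} \<or> N = M"
  shows "mcone M - {0} \<subseteq> rel_interior (mcone M)"
proof
  fix v assume v: "v \<in> mcone M - {0}"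
  show "v \<in> rel_interior (mcone M)"
  proof (rule ccontr)
    assume nv: "v \<notin> rel_interior (mcone M)"
    obtain a where a: "a \<noteq> 0" "\<And>y. y \<in> closure (mcone M) \<Longrightarrow> a \<bullet> v \<le> a \<bullet> y"
       "\<And>y. y \<in> rel_interior (mcone M) \<Longrightarrow> a \<bullet> v < a \<bullet> y"
      using supporting_hyperplane_relative_frontier[OF convex_mcone _ nv] v closure_subset by blast
    have a1: "a \<bullet> v \<le> a \<bullet> y" if "y \<in> mcone M" for y using a(2) that closure_subset by blast
    have "a \<bullet> v \<le> 0" using a1[OF mcone_0] by simp
    moreover have "a \<bullet> v \<le> 2 * (a \<bullet> v)" using a1[OF mcone_scale[of v M 2]] v by auto
    ultimately have av: "a \<bullet> v = 0" by linarith
    have pos: "a \<bullet> y \<ge> 0" if "y \<in> mcone M" for y using a1[OF that] av by simp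
    define F where "F = {z \<in> mcone M. a \<bullet> z = 0}"
    have face: "face_of_cone F (mcone M)"
      unfolding face_of_cone_def
    proof (intro conjI)
      show "convex_cone F" unfolding convex_cone_def
      proof (intro conjI)
        show "F \<noteq> {}" using mcone_0[of M] F_def by force
        have "F = mcone M \<inter> {z. a \<bullet> z = 0}" by (auto simp: F_def)
        then show "convex F" using convex_mcone convex_hyperplane convex_Int by metis
        show "conic F" unfolding conic_def F_def using mcone_scale by auto
      qed
      show "F \<subseteq> mcone M" by (auto simp: F_def)
      show "\<forall>x\<in>mcone M. \<forall>y\<in>mcone M. F \<inter> open_segment x y \<noteq> {} \<longrightarrow> x \<in> F \<and> y \<in> F"
      proof (intro ballI impI)
      fix x y assume xy: "x \<in> mcone M" "y \<in> mcone M" "F \<inter> open_segment x y \<noteq> {}"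
      then obtain z where z: "z \<in> F" "z \<in> open_segment x y" by blast
      then obtain u where u: "0 < u" "u < 1" "z = (1 - u) *\<^sub>R x + u *\<^sub>R y"
        unfolding in_segment by blast
      have "0 = (1 - u) * (a \<bullet> x) + u * (a \<bullet> y)" using z(1) u(3) by (simp add: F_def inner_add_right)
      moreover have "a \<bullet> x \<ge> 0" "a \<bullet> y \<ge> 0" using pos xy by auto
      ultimately have "a \<bullet> x = 0" "a \<bullet> y = 0" using u
        by (smt (verit) mult_nonneg_nonneg mult_pos_pos)+
      then show "x \<in> F \<and> y \<in> F" using xy by (auto simp: F_def)
      qed
    qed
    then have fs: "face_submonoid (M \<inter> F) M" unfolding face_submonoid_def by blast
    obtain m c w where m: "m \<in> M" "m \<noteq> 0" "c > 0" "w \<in> mcone M" "v = c *\<^sub>R m + w"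
      using mcone_decomp[of v M] v by blast
    have "0 = c * (a \<bullet> m) + a \<bullet> w" using av m(5) by (simp add: inner_add_right)
    moreover have "a \<bullet> m \<ge> 0" "a \<bullet> w \<ge> 0" using pos m mcone_base by auto
    ultimately have "a \<bullet> m = 0" using m(3) by (smt (verit) mult_pos_pos)
    then have "m \<in> M \<inter> F" using m mcone_base by (auto simp: F_def)
    then have "M \<inter> F = M" using B fs m(2) by blast
    then have "\<forall>m\<in>M. a \<bullet> m = 0" by (auto simp: F_def)
    then have z: "a \<bullet> y = 0" if "y \<in> mcone M" for y using mcone_inner_zero that by blast
    obtain y where "y \<in> rel_interior (mcone M)"
      using rel_interior_eq_empty[OF convex_mcone] mcone_0 by blast
    then show False using a(3) z av rel_interior_subset by fastforce
  qed
qed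



lemma open_step:
  assumes op: "openin (top_of_set (span M)) (mcone M - {0})"
    and v: "v \<in> mcone M - {0}" and x: "x \<in> span M"
  shows "\<exists>t>0. v - t *\<^sub>R x \<in> mcone M - {0}"
proof (cases "x = 0")
  case True then show ?thesis using v by (intro exI[of _ 1]) auto
next
  case False
  obtain e where e: "e > 0" "ball v e \<inter> span M \<subseteq> mcone M - {0}"
    using op v unfolding openin_contains_ball by blast
  define t where "t = e / (2 * norm x)"
  have t: "t > 0" using e False by (simp add: t_def)
  have "dist v (v - t *\<^sub>R x) = t * norm x" using t by (simp add: dist_norm)
  also have "\<dots> = e / 2" using False by (simp add: t_def)
  finally have "v - t *\<^sub>R x \<in> ball v e" using e by simp
  moreover have "v - t *\<^sub>R x \<in> span M"
    using v x mcone_span by (blast intro: span_diff span_scale)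
  ultimately show ?thesis using e t by blast
qed

lemma face_0: assumes "face_of_cone F C" shows "0 \<in> F"
proof -
  have cc: "convex_cone F" using assms face_of_cone_def by blast
  then obtain z where "z \<in> F" unfolding convex_cone_def by blast
  then have "0 *\<^sub>R z \<in> F" using cc unfolding convex_cone_def conic_def by blast
  then show ?thesis by simp
qed

lemma c_to_b:
  assumes sub: "submonoid_Nd M" and op: "openin (top_of_set (span M)) (mcone M - {0})"
  shows "\<forall>N. face_submonoid N M \<longrightarrow> N = {0} \<or> N = M"
proof (intro allI impI)
  fix N assume "face_submonoid N M"
  then obtain F where F: "face_of_cone F (mcone M)" "N = M \<inter> F"
    unfolding face_submonoid_def by blast
  have cc: "convex_cone F" using F face_of_cone_def by blast
  have sc: "c *\<^sub>R z \<in> F" if "z \<in> F" "c \<ge> 0" for z c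
    using cc that unfolding convex_cone_def conic_def by blast
  have fc: "x \<in> F" if "x \<in> mcone M" "y \<in> mcone M" "F \<inter> open_segment x y \<noteq> {}" for x y
    using F(1) that unfolding face_of_cone_def by blast
  show "N = {0} \<or> N = M"
  proof (cases "N = {0}")
    case False
    have "0 \<in> N" using F(2) face_0[OF F(1)] sub unfolding submonoid_Nd_def by blast
    then obtain m where m: "m \<in> M" "m \<in> F" "m \<noteq> 0" using False F by blast
    have "M \<subseteq> F"
    proof
      fix x assume x: "x \<in> M"
      show "x \<in> F"
      proof (cases "x = 0")
        case True then show ?thesis using face_0[OF F(1)] by simp
      next
        case False
        obtain t where t: "t > 0" "m - t *\<^sub>R x \<in> mcone M - {0}"
          using open_step[OF op, of m x] m mcone_base span_base x by blast
        define a where "a = (2 * t) *\<^sub>R x"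
        define b where "b = 2 *\<^sub>R (m - t *\<^sub>R x)"
        have aC: "a \<in> mcone M" unfolding a_def using t x by (auto intro: mcone_scale mcone_base)
        have bC: "b \<in> mcone M" unfolding b_def using t by (auto intro: mcone_scale)
        have mid: "m = (1 - 1/2) *\<^sub>R a + (1/2) *\<^sub>R b"
          by (simp add: a_def b_def algebra_simps)
        have xa: "x = (1 / (2 * t)) *\<^sub>R a" using t by (simp add: a_def)
        show ?thesis
        proof (cases "a = b")
          case True
          then have "m = a" using mid by (simp add: scaleR_add_left[symmetric])
          then show ?thesis using xa sc[of m "1 / (2 * t)"] m t by simp
        next
          case False
          then have "m \<in> open_segment a b" unfolding mid in_segment
            by (intro conjI exI[of _ "1/2"]) auto
          then have "a \<in> F" using fc[OF aC bC] m by blast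
          then show ?thesis using xa sc[of a "1 / (2 * t)"] t by simp
        qed
      qed
    qed
    then show ?thesis using F by blast
  qed simp
qed



lemma pointed:
  assumes sub: "submonoid_Nd M" and "m \<in> M" "k \<in> M" "m + k = 0" shows "m = 0"
proof -
  have "m $ i = 0" for i
  proof -
    have "m $ i \<in> \<nat>" "k $ i \<in> \<nat>" using sub assms unfolding submonoid_Nd_def by auto
    then have "m $ i \<ge> 0" "k $ i \<ge> 0" by (auto elim!: Nats_cases)
    moreover have "(m + k) $ i = 0" using assms(4) by simp
    then have "m $ i + k $ i = 0" by simp
    ultimately show ?thesis by linarith
  qed
  then show ?thesis by (simp add: vec_eq_iff)
qed

lemma mcone_ne: "mcone M \<noteq> {}" using mcone_0 by blast

lemma shrink:
  assumes "v \<in> mcone M" "v - s *\<^sub>R a \<in> mcone M" "s > 0" "0 \<le> t" "t \<le> s"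
  shows "v - t *\<^sub>R a \<in> mcone M"
proof -
  have "v - t *\<^sub>R a = (1 - t/s) *\<^sub>R v + (t/s) *\<^sub>R (v - s *\<^sub>R a)"
    using assms(3) by (simp add: algebra_simps)
  also have "\<dots> \<in> mcone M"
    using assms by (intro mcone_add mcone_scale) (auto simp: field_simps)
  finally show ?thesis .
qed

definition PP :: "(real^'n) set \<Rightarrow> real^'n \<Rightarrow> real^'n \<Rightarrow> bool" where
  "PP M v w \<longleftrightarrow> (\<exists>s>0. v - s *\<^sub>R w \<in> mcone M)"

lemma PP_add: assumes "v \<in> mcone M" "PP M v a" "PP M v b" shows "PP M v (a + b)"
proof -
  obtain sa sb where s: "sa > 0" "v - sa *\<^sub>R a \<in> mcone M" "sb > 0" "v - sb *\<^sub>R b \<in> mcone M"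
    using assms unfolding PP_def by blast
  define u where "u = min sa sb / 2"
  have u: "u > 0" "2 * u \<le> sa" "2 * u \<le> sb" using s by (auto simp: u_def)
  have "v - u *\<^sub>R (a + b) = (1/2) *\<^sub>R (v - (2*u) *\<^sub>R a) + (1/2) *\<^sub>R (v - (2*u) *\<^sub>R b)"
    by (simp add: vec_eq_iff algebra_simps)
  also have "\<dots> \<in> mcone M"
    using shrink[OF assms(1) s(2) s(1), of "2*u"] shrink[OF assms(1) s(4) s(3), of "2*u"] u
    by (intro mcone_add mcone_scale) auto
  finally show ?thesis unfolding PP_def using u by blast
qed

lemma PP_scale: assumes "v \<in> mcone M" "PP M v a" "c \<ge> 0" shows "PP M v (c *\<^sub>R a)"
proof (cases "c = 0")
  case True then show ?thesis using assms unfolding PP_def by (intro exI[of _ 1]) auto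
next
  case False
  obtain s where s: "s > 0" "v - s *\<^sub>R a \<in> mcone M" using assms unfolding PP_def by blast
  have "v - (s/c) *\<^sub>R (c *\<^sub>R a) = v - s *\<^sub>R a" using False by simp
  moreover have "s / c > 0" using s False assms(3) by simp
  ultimately show ?thesis unfolding PP_def using s by metis
qed

lemma PP_sum:
  assumes "v \<in> mcone M" "finite S" "\<And>x. x \<in> S \<Longrightarrow> PP M v x" "\<And>x. x \<in> S \<Longrightarrow> c x \<ge> 0"
  shows "PP M v (\<Sum>x\<in>S. c x *\<^sub>R x)"
  using assms(2,3,4)
proof (induction S rule: finite_induct)
  case empty then show ?case using assms(1) unfolding PP_def by (intro exI[of _ 1]) auto
next
  case (insert x F)
  then show ?case using PP_add[OF assms(1)] PP_scale[OF assms(1)] by simp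
qed

lemma a_to_relint:
  assumes sub: "submonoid_Nd M" and pr: "primary M"
  shows "mcone M - {0} \<subseteq> rel_interior (mcone M)"
proof
  fix v assume v: "v \<in> mcone M - {0}"
  have vC: "v \<in> mcone M" using v by blast
  have Q0: "PP M m0 m" if "m0 \<in> M" "m0 \<noteq> 0" "m \<in> M" for m0 m
  proof (cases "m = 0")
    case True then show ?thesis unfolding PP_def using that mcone_base by (intro exI[of _ 1]) auto
  next
    case False
    have mm: "m \<in> M - {0}" "m0 \<in> M - {0}" using that False by auto
    have "\<exists>n. \<exists>k\<in>M. of_nat n *\<^sub>R m0 = m + k"
      using pr mm unfolding primary_def by blast
    then obtain n k where nk: "k \<in> M" "of_nat n *\<^sub>R m0 = m + k" by blast
    have "n \<noteq> 0"
    proof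
      assume "n = 0"
      then have "m + k = 0" using nk(2) by simp
      then show False using pointed[OF sub that(3) nk(1)] False by blast
    qed
    have "(1 / of_nat n) *\<^sub>R (of_nat n *\<^sub>R m0) = (1 / of_nat n) *\<^sub>R (m + k)"
      using nk(2) by simp
    then have "m0 = (1 / of_nat n) *\<^sub>R m + (1 / of_nat n) *\<^sub>R k"
      using \<open>n \<noteq> 0\<close> by (simp add: scaleR_add_right)
    then have "m0 - (1 / of_nat n) *\<^sub>R m = (1 / of_nat n) *\<^sub>R k"
      by (simp add: algebra_simps)
    also have "\<dots> \<in> mcone M" using nk(1) by (intro mcone_scale mcone_base) auto
    finally have "m0 - (1 / real n) *\<^sub>R m \<in> mcone M" by simp
    moreover have "1 / real n > 0" using \<open>n \<noteq> 0\<close> by simp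
    ultimately show ?thesis unfolding PP_def by blast
  qed
  obtain m0 c w where m0: "m0 \<in> M" "m0 \<noteq> 0" "c > 0" "w \<in> mcone M" "v = c *\<^sub>R m0 + w"
    using mcone_decomp[of v M] v by blast
  have Q: "PP M v m" if mM: "m \<in> M" for m
  proof -
    obtain s where s: "s > 0" "m0 - s *\<^sub>R m \<in> mcone M"
      using Q0[OF m0(1,2) mM] unfolding PP_def by blast
    have "v - (c * s) *\<^sub>R m = c *\<^sub>R (m0 - s *\<^sub>R m) + w" using m0(5) by (simp add: algebra_simps)
    also have "\<dots> \<in> mcone M" using s m0 by (intro mcone_add mcone_scale) auto
    finally have "v - (c * s) *\<^sub>R m \<in> mcone M" .
    moreover have "c * s > 0" using s m0 by simp
    ultimately show ?thesis unfolding PP_def by blast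
  qed
  have P: "PP M v z" if zC: "z \<in> mcone M" for z
  proof -
    obtain S d where S: "finite S" "S \<subseteq> M" "\<forall>u\<in>S. d u \<ge> 0" "z = (\<Sum>u\<in>S. d u *\<^sub>R u)"
      using zC unfolding mcone_iff by blast
    have "PP M v (\<Sum>u\<in>S. d u *\<^sub>R u)"
    proof (rule PP_sum[OF vC S(1)])
      show "PP M v u" if "u \<in> S" for u using Q that S(2) by blast
      show "0 \<le> d u" if "u \<in> S" for u using S(3) that by blast
    qed
    then show ?thesis using S(4) by simp
  qed
  show "v \<in> rel_interior (mcone M)"
    unfolding convex_rel_interior_iff[OF convex_mcone mcone_ne]
  proof
    fix x assume x: "x \<in> mcone M"
    obtain s where s: "s > 0" "v - s *\<^sub>R x \<in> mcone M" using P[OF x] unfolding PP_def by blast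
    have le: "s / (1 + s) \<le> s" using s(1) by (simp add: divide_le_eq)
    have "v - (s / (1 + s)) *\<^sub>R x \<in> mcone M"
      by (rule shrink[OF vC s(2) s(1)]) (use s(1) le in simp_all)
    then have "(1 + s) *\<^sub>R (v - (s / (1 + s)) *\<^sub>R x) \<in> mcone M"
      using s by (intro mcone_scale) auto
    moreover have "(1 + s) *\<^sub>R (v - (s / (1 + s)) *\<^sub>R x) = (1 - (1 + s)) *\<^sub>R x + (1 + s) *\<^sub>R v"
    proof -
      have "(1 + s) * (s / (1 + s)) = s" using s(1) by simp
      then show ?thesis by (simp add: algebra_simps)
    qed
    ultimately have "(1 - (1 + s)) *\<^sub>R x + (1 + s) *\<^sub>R v \<in> mcone M" by simp
    moreover have "1 + s > 1" using s(1) by simp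
    ultimately show "\<exists>e>1. (1 - e) *\<^sub>R x + e *\<^sub>R v \<in> mcone M" by blast
  qed
qed



lemma finite_int_box: "finite {v :: real^'n. \<forall>i. v $ i \<in> \<int> \<and> \<bar>v $ i\<bar> \<le> B}"
proof -
  let ?K = "{k::real. k \<in> \<int> \<and> \<bar>k\<bar> \<le> B}"
  have sub: "{v :: real^'n. \<forall>i. v $ i \<in> \<int> \<and> \<bar>v $ i\<bar> \<le> B} \<subseteq> vec_lambda ` (PiE UNIV (\<lambda>_. ?K))"
  proof
    fix v :: "real^'n" assume v: "v \<in> {v. \<forall>i. v $ i \<in> \<int> \<and> \<bar>v $ i\<bar> \<le> B}"
    have "(\<lambda>i. v $ i) \<in> PiE UNIV (\<lambda>_. ?K)" using v by (simp add: PiE_iff)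
    moreover have "v = vec_lambda (\<lambda>i. v $ i)" by (simp add: vec_lambda_eta)
    ultimately show "v \<in> vec_lambda ` (PiE UNIV (\<lambda>_. ?K))" by blast
  qed
  have "finite (PiE (UNIV::'n set) (\<lambda>_. ?K))"
    by (rule finite_PiE) (simp_all add: finite_abs_int_segment)
  then show ?thesis using finite_subset[OF sub finite_imageI] by blast
qed

lemma c_to_a:
  assumes sub: "submonoid_Nd M" and ne: "M \<noteq> {0}"
    and op: "openin (top_of_set (span M)) (mcone M - {0})"
  shows "primary M"
  unfolding primary_def
proof (intro conjI ballI ne)
  fix x y assume x: "x \<in> M - {0}" and y: "y \<in> M - {0}"
  obtain \<epsilon> where e: "\<epsilon> > 0" "y - \<epsilon> *\<^sub>R x \<in> mcone M - {0}"
    using open_step[OF op, of y x] x y mcone_base span_base by blast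
  obtain S c where S: "finite S" "S \<subseteq> M" "\<forall>m\<in>S. c m \<ge> 0" "y - \<epsilon> *\<^sub>R x = (\<Sum>m\<in>S. c m *\<^sub>R m)"
  proof -
    have "y - \<epsilon> *\<^sub>R x \<in> mcone M" using e(2) by blast
    then show ?thesis using that unfolding mcone_iff by blast
  qed
  define r where "r n = of_nat n *\<^sub>R y - real_of_int \<lfloor>of_nat n * \<epsilon>\<rfloor> *\<^sub>R x
      - (\<Sum>m\<in>S. real_of_int \<lfloor>of_nat n * c m\<rfloor> *\<^sub>R m)" for n :: nat
  have ny: "of_nat n *\<^sub>R y = (of_nat n * \<epsilon>) *\<^sub>R x + (\<Sum>m\<in>S. (of_nat n * c m) *\<^sub>R m)" for n :: nat
  proof -
    have "of_nat n *\<^sub>R y = of_nat n *\<^sub>R (\<epsilon> *\<^sub>R x) + of_nat n *\<^sub>R (y - \<epsilon> *\<^sub>R x)"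
      by (simp add: algebra_simps)
    then show ?thesis unfolding S(4) by (simp add: scaleR_sum_right)
  qed
  have rfrac: "r n = (of_nat n * \<epsilon> - real_of_int \<lfloor>of_nat n * \<epsilon>\<rfloor>) *\<^sub>R x
      + (\<Sum>m\<in>S. (of_nat n * c m - real_of_int \<lfloor>of_nat n * c m\<rfloor>) *\<^sub>R m)" for n
    unfolding r_def ny by (simp add: scaleR_diff_left sum_subtractf algebra_simps)
  define B where "B = norm x + (\<Sum>m\<in>S. norm m)"
  have rB: "norm (r n) \<le> B" for n
  proof -
    have fr: "\<bar>a - real_of_int \<lfloor>a\<rfloor>\<bar> \<le> 1" for a :: real
      by (smt (verit) of_int_floor_le real_of_int_floor_add_one_gt)
    have "norm (r n) \<le> norm ((of_nat n * \<epsilon> - real_of_int \<lfloor>of_nat n * \<epsilon>\<rfloor>) *\<^sub>R x)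
      + norm (\<Sum>m\<in>S. (of_nat n * c m - real_of_int \<lfloor>of_nat n * c m\<rfloor>) *\<^sub>R m)"
      unfolding rfrac by (rule norm_triangle_ineq)
    also have "\<dots> \<le> norm x + (\<Sum>m\<in>S. norm m)"
    proof (rule add_mono)
      show "norm ((of_nat n * \<epsilon> - real_of_int \<lfloor>of_nat n * \<epsilon>\<rfloor>) *\<^sub>R x) \<le> norm x"
        using fr[of "of_nat n * \<epsilon>"] by (simp add: mult_left_le_one_le mult_right_le_one_le)
      have "norm (\<Sum>m\<in>S. (of_nat n * c m - real_of_int \<lfloor>of_nat n * c m\<rfloor>) *\<^sub>R m)
          \<le> (\<Sum>m\<in>S. norm ((of_nat n * c m - real_of_int \<lfloor>of_nat n * c m\<rfloor>) *\<^sub>R m))"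
        by (rule norm_sum)
      also have "\<dots> \<le> (\<Sum>m\<in>S. norm m)"
      proof (rule sum_mono)
        fix m assume "m \<in> S"
        let ?f = "of_nat n * c m - real_of_int \<lfloor>of_nat n * c m\<rfloor>"
        have "0 \<le> ?f" "?f \<le> 1" using fr[of "of_nat n * c m"] by auto
        then have "?f * norm m \<le> norm m" by (simp add: mult_left_le_one_le)
        then show "norm (?f *\<^sub>R m) \<le> norm m" using \<open>0 \<le> ?f\<close> by simp
      qed
      finally show "norm (\<Sum>m\<in>S. (of_nat n * c m - real_of_int \<lfloor>of_nat n * c m\<rfloor>) *\<^sub>R m) \<le> (\<Sum>m\<in>S. norm m)" .
    qed
    finally show ?thesis by (simp add: B_def)
  qed
  have nat_int: "v $ i \<in> \<int>" if "v \<in> M" for v i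
    using sub that unfolding submonoid_Nd_def using Nats_subset_Ints by blast
  have rint: "r n $ i \<in> \<int>" for n i
    unfolding r_def using x y S(2) nat_int
    by (auto intro!: Ints_diff Ints_mult Ints_sum simp: sum_component)
  have rR: "range r \<subseteq> {v. \<forall>i. v $ i \<in> \<int> \<and> \<bar>v $ i\<bar> \<le> B}"
    using rint rB component_le_norm_cart order_trans by blast
  have "finite (range r)" using rR finite_int_box finite_subset by blast
  then obtain n0 where n0: "infinite {n. r n = r n0}"
    using pigeonhole_infinite[of "UNIV :: nat set" r] by auto
  obtain L :: nat where L: "1 / \<epsilon> < of_nat L" using reals_Archimedean2 by blast
  then have L1: "1 \<le> of_nat L * \<epsilon>" using e(1) by (simp add: field_simps)
  obtain n2 where n2: "n2 \<ge> n0 + L" "r n2 = r n0"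
    using n0 unfolding infinite_nat_iff_unbounded_le by blast
  define k where "k = \<lfloor>of_nat n2 * \<epsilon>\<rfloor> - \<lfloor>of_nat n0 * \<epsilon>\<rfloor>"
  define d where "d m = \<lfloor>of_nat n2 * c m\<rfloor> - \<lfloor>of_nat n0 * c m\<rfloor>" for m
  have "of_nat n0 * \<epsilon> + 1 \<le> of_nat n2 * \<epsilon>"
  proof -
    have "real n0 + real L \<le> real n2" using n2(1) by linarith
    then have "(real n0 + real L) * \<epsilon> \<le> real n2 * \<epsilon>" using e(1) by (simp add: mult_right_mono)
    then show ?thesis using L1 by (simp add: algebra_simps)
  qed
  then have k1: "k \<ge> 1" unfolding k_def
    by (smt (verit, ccfv_SIG) floor_add_int floor_mono of_int_1)
  have d0: "d m \<ge> 0" if "m \<in> S" for m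
  proof -
    have "real n0 * c m \<le> real n2 * c m" using n2(1) S(3) that by (simp add: mult_right_mono)
    then show ?thesis unfolding d_def using floor_mono by fastforce
  qed
  define D where "D = n2 - n0"
  have "of_nat D *\<^sub>R y = of_nat n2 *\<^sub>R y - of_nat n0 *\<^sub>R y"
    using n2(1) by (simp add: D_def of_nat_diff scaleR_diff_left)
  also have "\<dots> = real_of_int k *\<^sub>R x + (\<Sum>m\<in>S. real_of_int (d m) *\<^sub>R m)"
    using n2(2) unfolding r_def k_def d_def
    by (simp add: algebra_simps sum_subtractf scaleR_diff_left)
  also have "\<dots> = x + (of_nat (nat (k - 1)) *\<^sub>R x + (\<Sum>m\<in>S. of_nat (nat (d m)) *\<^sub>R m))"
  proof -
    have kk: "real (nat (k - 1)) = real_of_int k - 1" using k1 by simp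
    have "real_of_int k *\<^sub>R x = (1 + (real_of_int k - 1)) *\<^sub>R x" by simp
    also have "\<dots> = x + of_nat (nat (k - 1)) *\<^sub>R x" unfolding scaleR_add_left kk by simp
    finally have "real_of_int k *\<^sub>R x = x + of_nat (nat (k - 1)) *\<^sub>R x" .
    moreover have "(\<Sum>m\<in>S. real_of_int (d m) *\<^sub>R m) = (\<Sum>m\<in>S. of_nat (nat (d m)) *\<^sub>R m)"
      using d0 by (intro sum.cong) auto
    ultimately show ?thesis by simp
  qed
  finally have eq: "of_nat D *\<^sub>R y = x + (of_nat (nat (k - 1)) *\<^sub>R x + (\<Sum>m\<in>S. of_nat (nat (d m)) *\<^sub>R m))" .
  have "of_nat (nat (k - 1)) *\<^sub>R x + (\<Sum>m\<in>S. of_nat (nat (d m)) *\<^sub>R m) \<in> M"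
  proof -
    have 1: "of_nat (nat (k - 1)) *\<^sub>R x \<in> M" using sub_nat_scale[OF sub] x by blast
    have 2: "(\<Sum>m\<in>S. of_nat (nat (d m)) *\<^sub>R m) \<in> M"
      by (rule sub_sum[OF sub S(1)]) (use S(2) sub_nat_scale[OF sub] in blast)
    show ?thesis using 1 2 sub unfolding submonoid_Nd_def by blast
  qed
  then show "\<exists>n. \<exists>m\<in>M. of_nat n *\<^sub>R y = x + m" using eq by blast
qed


theorem mainTheorem13:
  fixes M :: "(real ^ 'n) set"
  assumes "submonoid_Nd M" and "M \<noteq> {0}"
  shows "(primary M \<longleftrightarrow> (\<forall>N. face_submonoid N M \<longrightarrow> N = {0} \<or> N = M))
       \<and> ((\<forall>N. face_submonoid N M \<longrightarrow> N = {0} \<or> N = M) \<longleftrightarrow>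
            openin (top_of_set (span M)) (mcone M - {0}))"
proof -
  have ac: "primary M \<Longrightarrow> openin (top_of_set (span M)) (mcone M - {0})"
    using open_from_relint a_to_relint assms(1) by blast
  have ca: "openin (top_of_set (span M)) (mcone M - {0}) \<Longrightarrow> primary M"
    using c_to_a assms by blast
  have bc: "(\<forall>N. face_submonoid N M \<longrightarrow> N = {0} \<or> N = M) \<Longrightarrow> openin (top_of_set (span M)) (mcone M - {0})"
    using open_from_relint b_to_relint by blast
  have cb: "openin (top_of_set (span M)) (mcone M - {0}) \<Longrightarrow> (\<forall>N. face_submonoid N M \<longrightarrow> N = {0} \<or> N = M)"
    using c_to_b assms(1) by blast
  show ?thesis using ac ca bc cb by blast
qed

end
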